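(* Let $p,q\ge 1$ be integers with $p\neq q$ such that $q(2q-p-1)/(q-p)$ is a positive integer. Then the mixed extension of $P_3$ of type $\big(p,\,-q,\,q(2q-p-1)/(q-p)\big)$ and the mixed extension of $P_3$ of type $\big(-q,\,2q-1,\,p(2q-p-1)/(q-p)\big)$ are cospectral (have the same adjacency spectrum).
   Context: Let $P_3$ be the path with vertices $1,2,3$ and edges $\{1,2\},\{2,3\}$. For nonzero integers $t_1,t_2,t_3$, the mixed extension of $P_3$ of type $(t_1,t_2,t_3)$ is the graph whose vertex set is a disjoint union $V_1\cup V_2\cup V_3$ with $|V_i|=|t_i|$, where $V_i$ is a clique if $t_i>0$ and a coclique (independent set) if $t_i<0$, every vertex of $V_2$ is adjacent to every vertex of $V_1\cup V_3$, and there are no edges between $V_1$ and $V_3$. Two graphs are cospectral if their adjacency matrices have the same characteristic polynomial. *)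

theory Defs
  imports "Jordan_Normal_Form.Char_Poly"
begin

text \<open>Mixed extension of the path P_3 (vertices 1,2,3, edges {1,2},{2,3}) of type (t1,t2,t3).
 Vertices are 0..<|t1|+|t2|+|t3|; the first |t1| form V_1, the next |t2| form V_2, the rest V_3.\<close>

definition mx_block :: "int \<Rightarrow> int \<Rightarrow> int \<Rightarrow> nat \<Rightarrow> nat" where
  "mx_block t1 t2 t3 v =
     (if v < nat \<bar>t1\<bar> then 1 else if v < nat \<bar>t1\<bar> + nat \<bar>t2\<bar> then 2 else 3)"

definition mx_type :: "int \<Rightarrow> int \<Rightarrow> int \<Rightarrow> nat \<Rightarrow> int" where
  "mx_type t1 t2 t3 b = (if b = 1 then t1 else if b = 2 then t2 else t3)"

definition P3_edge :: "nat \<Rightarrow> nat \<Rightarrow> bool" where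
  "P3_edge a b \<longleftrightarrow> {a, b} = {1, 2} \<or> {a, b} = {2, 3}"

definition mx_adj :: "int \<Rightarrow> int \<Rightarrow> int \<Rightarrow> nat \<Rightarrow> nat \<Rightarrow> bool" where
  "mx_adj t1 t2 t3 u v \<longleftrightarrow> u \<noteq> v \<and>
     (let bu = mx_block t1 t2 t3 u; bv = mx_block t1 t2 t3 v in
       (bu = bv \<and> mx_type t1 t2 t3 bu > 0) \<or> P3_edge bu bv)"

definition mixed_ext_P3_adj :: "int \<Rightarrow> int \<Rightarrow> int \<Rightarrow> int mat" where
  "mixed_ext_P3_adj t1 t2 t3 =
     (let n = nat \<bar>t1\<bar> + nat \<bar>t2\<bar> + nat \<bar>t3\<bar> in
      mat n n (\<lambda>(u, v). if mx_adj t1 t2 t3 u v then 1 else 0))"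

definition cospectral :: "int mat \<Rightarrow> int mat \<Rightarrow> bool" where
  "cospectral A B \<longleftrightarrow> char_poly A = char_poly B"

end

theory Submission
  imports Defs
begin
lemma det1: assumes "A \<in> carrier_mat 1 1" shows "det A = A $$ (0,0)"
proof -
  have "mat_delete A 0 0 \<in> carrier_mat 0 0" using mat_delete_carrier[OF assms] by simp
  then show ?thesis using laplace_expansion_row[OF assms, of 0] assms
  by (simp add: cofactor_def)
qed
lemma det2: assumes "(A :: 'a :: comm_ring_1 mat) \<in> carrier_mat 2 2" shows "det A = A $$ (0,0) * A $$ (1,1) - A $$ (0,1) * A $$ (1,0)"
proof -
  have "det A = (\<Sum>j<2. A $$ (0,j) * cofactor A 0 j)" using laplace_expansion_row[OF assms, of 0] by simp
  also have "\<dots> = A $$ (0,0) * A $$ (1,1) - A $$ (0,1) * A $$ (1,0)"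
    using assms by (simp add: cofactor_def eval_nat_numeral det1 mat_delete_carrier mat_delete_def insert_index_def)
  finally show ?thesis .
qed
lemma det3: assumes "(A :: 'a :: comm_ring_1 mat) \<in> carrier_mat 3 3" shows "det A = 
  A $$ (0,0) * (A $$ (1,1) * A $$ (2,2) - A $$ (1,2) * A $$ (2,1))
 - A $$ (0,1) * (A $$ (1,0) * A $$ (2,2) - A $$ (1,2) * A $$ (2,0))
 + A $$ (0,2) * (A $$ (1,0) * A $$ (2,1) - A $$ (1,1) * A $$ (2,0))" (is "_ = ?r")
proof -
  have "det A = (\<Sum>j<3. A $$ (0,j) * cofactor A 0 j)" using laplace_expansion_row[OF assms, of 0] by simp
  also have "\<dots> = ?r"
    using assms by (simp add: cofactor_def eval_nat_numeral det2 mat_delete_carrier mat_delete_def insert_index_def algebra_simps)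
  finally show ?thesis .
qed
lemma sylvester: fixes U :: "'a::idom mat"
  assumes U: "U \<in> carrier_mat n k" and V: "V \<in> carrier_mat k n"
  shows "det (1\<^sub>m n + U * V) = det (1\<^sub>m k + V * U)"
proof -
  define M where "M = four_block_mat (1\<^sub>m n) (-U) V (1\<^sub>m k)"
  define L where "L = four_block_mat (1\<^sub>m n) U (0\<^sub>m k n) (1\<^sub>m k)"
  have M: "M \<in> carrier_mat (n+k) (n+k)" unfolding M_def using U V by auto
  have L: "L \<in> carrier_mat (n+k) (n+k)" unfolding L_def using U V by auto
  have dL: "det L = 1" unfolding L_def
    using det_four_block_mat_lower_left_zero[OF one_carrier_mat[of n] _ refl one_carrier_mat[of k], of U] U by simp
  have LM: "L * M = four_block_mat (1\<^sub>m n + U * V) (0\<^sub>m n k) V (1\<^sub>m k)"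
    unfolding L_def M_def
    by (subst mult_four_block_mat[OF one_carrier_mat U zero_carrier_mat one_carrier_mat one_carrier_mat uminus_carrier_mat[OF U] V one_carrier_mat], insert U V, auto)
  have MR: "M * L = four_block_mat (1\<^sub>m n) (0\<^sub>m n k) V (1\<^sub>m k + V * U)"
    unfolding L_def M_def
    by (subst mult_four_block_mat[OF one_carrier_mat uminus_carrier_mat[OF U] V one_carrier_mat one_carrier_mat U zero_carrier_mat one_carrier_mat], insert U V, auto)
  have "det (L * M) = det (1\<^sub>m n + U * V)" unfolding LM
    by (subst det_four_block_mat_upper_right_zero[where n=n and m=k], insert U V, auto)
  moreover have "det (M * L) = det (1\<^sub>m k + V * U)" unfolding MR
    by (subst det_four_block_mat_upper_right_zero[where n=n and m=k], insert U V, auto)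
  moreover have "det (L * M) = det (M * L)" using det_mult[OF L M] det_mult[OF M L] dL by simp
  ultimately show ?thesis by simp
qed

definition mf :: "int \<Rightarrow> int \<Rightarrow> int \<Rightarrow> nat \<Rightarrow> nat \<Rightarrow> real" where
  "mf t1 t2 t3 b c = (if (b = c \<and> mx_type t1 t2 t3 b > 0) \<or> P3_edge b c then 1 else 0)"

lemma blk_range: "mx_block t1 t2 t3 v \<in> {1,2,3}"
  unfolding mx_block_def by auto

lemma main_det:
  fixes t1 t2 t3 :: int and x :: real
  defines "n1 \<equiv> nat \<bar>t1\<bar>" and "n2 \<equiv> nat \<bar>t2\<bar>" and "n3 \<equiv> nat \<bar>t3\<bar>"
  defines "lam \<equiv> \<lambda>b. x + mf t1 t2 t3 b b"
  defines "AR \<equiv> map_mat real_of_int (mixed_ext_P3_adj t1 t2 t3)"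
  assumes x0: "x \<noteq> 0" and x1: "x \<noteq> -1"
  shows "poly (char_poly AR) x = lam 1 ^ n1 * lam 2 ^ n2 * lam 3 ^ n3 *
     det (mat 3 3 (\<lambda>(i,j). (if i = j then 1 else 0) - mf t1 t2 t3 (i+1) (j+1) * real (card {v. v < n1+n2+n3 \<and> mx_block t1 t2 t3 v = j+1}) / lam (j+1)))"
proof -
  define n where "n = n1 + n2 + n3"
  define blk where "blk = mx_block t1 t2 t3"
  define m where "m = mf t1 t2 t3"
  have lam_nz: "lam b \<noteq> 0" for b unfolding lam_def mf_def using x0 x1 by auto
  have AR: "AR \<in> carrier_mat n n" unfolding AR_def mixed_ext_P3_adj_def n_def n1_def n2_def n3_def by (simp add: Let_def)
  have ARe: "AR $$ (u,v) = (if u = v then 0 else m (blk u) (blk v))" if "u < n" "v < n" for u v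
    using that unfolding AR_def mixed_ext_P3_adj_def n_def n1_def n2_def n3_def m_def mf_def blk_def mx_adj_def
    by (auto simp: Let_def)
  define Lam where "Lam = mat n n (\<lambda>(i,j). if i = j then lam (blk i) else 0)"
  define W where "W = mat n 3 (\<lambda>(v,j). if blk v = j+1 then 1 / lam (j+1) else (0::real))"
  define V where "V = mat 3 n (\<lambda>(i,v). - m (i+1) (blk v))"
  have Lam: "Lam \<in> carrier_mat n n" and W: "W \<in> carrier_mat n 3" and V: "V \<in> carrier_mat 3 n"
    unfolding Lam_def W_def V_def by auto
  have three: "{0..<3::nat} = {0,1,2}" by auto
  have WV: "(W * V) $$ (k,v) = - m (blk k) (blk v) / lam (blk k)" if "k < n" "v < n" for k v
    using that blk_range[of t1 t2 t3 k] unfolding W_def V_def blk_def[symmetric]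
    by (auto simp: scalar_prod_def three)
  have eq1: "- (char_matrix AR x) = Lam * (1\<^sub>m n + W * V)"
  proof (rule eq_matI)
    fix u v assume u: "u < dim_row (Lam * (1\<^sub>m n + W * V))" and v: "v < dim_col (Lam * (1\<^sub>m n + W * V))"
    hence u: "u < n" and v: "v < n" using Lam W V by auto
    have "(Lam * (1\<^sub>m n + W * V)) $$ (u,v) = (\<Sum>l\<in>{0..<n}. (if u = l then lam (blk u) else 0) * (1\<^sub>m n + W * V) $$ (l,v))"
      using u v Lam W V by (simp add: scalar_prod_def Lam_def)
    also have "\<dots> = (\<Sum>l\<in>{0..<n}. if u = l then lam (blk u) * (1\<^sub>m n + W * V) $$ (l,v) else 0)"
      by (rule sum.cong) auto
    also have "\<dots> = lam (blk u) * (1\<^sub>m n + W * V) $$ (u,v)"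
      using u by simp
    also have "\<dots> = (if u = v then x else 0) - AR $$ (u,v)"
      using u v W V WV[OF u v] lam_nz[of "blk u"] ARe[OF u v]
      by (auto simp: lam_def m_def field_simps)
    finally show "(- char_matrix AR x) $$ (u,v) = (Lam * (1\<^sub>m n + W * V)) $$ (u,v)"
      using u v AR by (simp add: char_matrix_def)
  qed (insert AR Lam W V, auto simp: char_matrix_def)
  have p: "poly (char_poly AR) x = det Lam * det (1\<^sub>m n + W * V)"
    unfolding char_poly_matrix[OF AR] eq1
    by (rule det_mult[OF Lam], insert W V, auto)
  have "det Lam = prod_list (diag_mat Lam)"
    by (rule det_upper_triangular[OF _ Lam]) (auto simp: upper_triangular_def Lam_def)
  also have "\<dots> = (\<Prod>u\<in>{0..<n}. lam (blk u))"
    unfolding diag_mat_def using Lam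
    by (simp add: prod.distinct_set_conv_list[symmetric] Lam_def)
  also have "\<dots> = (\<Prod>u\<in>{0..<n1}. lam (blk u)) * (\<Prod>u\<in>{n1..<n1+n2}. lam (blk u)) * (\<Prod>u\<in>{n1+n2..<n}. lam (blk u))"
    unfolding n_def by (simp add: prod.atLeastLessThan_concat)
  also have "\<dots> = lam 1 ^ n1 * lam 2 ^ n2 * lam 3 ^ n3"
  proof -
    have "(\<Prod>u\<in>{0..<n1}. lam (blk u)) = (\<Prod>u\<in>{0..<n1}. lam 1)"
      by (rule prod.cong) (auto simp: blk_def mx_block_def n1_def)
    moreover have "(\<Prod>u\<in>{n1..<n1+n2}. lam (blk u)) = (\<Prod>u\<in>{n1..<n1+n2}. lam 2)"
      by (rule prod.cong) (auto simp: blk_def mx_block_def n1_def n2_def)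
    moreover have "(\<Prod>u\<in>{n1+n2..<n}. lam (blk u)) = (\<Prod>u\<in>{n1+n2..<n}. lam 3)"
      by (rule prod.cong) (auto simp: blk_def mx_block_def n1_def n2_def n_def)
    ultimately show ?thesis by (simp add: n_def)
  qed
  finally have dLam: "det Lam = lam 1 ^ n1 * lam 2 ^ n2 * lam 3 ^ n3" .
  have syl: "det (1\<^sub>m n + W * V) = det (1\<^sub>m 3 + V * W)" by (rule sylvester[OF W V])
  have VW: "1\<^sub>m 3 + V * W = mat 3 3 (\<lambda>(i,j). (if i = j then 1 else 0) - mf t1 t2 t3 (i+1) (j+1) * real (card {v. v < n1+n2+n3 \<and> mx_block t1 t2 t3 v = j+1}) / lam (j+1))"
  proof (rule eq_matI)
    fix i j assume i: "i < dim_row (mat 3 3 (\<lambda>(i,j). (if i = j then 1 else 0) - mf t1 t2 t3 (i+1) (j+1) * real (card {v. v < n1+n2+n3 \<and> mx_block t1 t2 t3 v = j+1}) / lam (j+1)))"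
      and j: "j < dim_col (mat 3 3 (\<lambda>(i,j). (if i = j then 1 else 0) - mf t1 t2 t3 (i+1) (j+1) * real (card {v. v < n1+n2+n3 \<and> mx_block t1 t2 t3 v = j+1}) / lam (j+1)))"
    hence i: "i < 3" and j: "j < 3" by auto
    have "(V * W) $$ (i,j) = (\<Sum>v\<in>{0..<n}. if blk v = j+1 then - m (i+1) (j+1) / lam (j+1) else 0)"
      using i j V W by (auto simp: scalar_prod_def V_def W_def intro!: sum.cong)
    also have "\<dots> = (\<Sum>v\<in>{v\<in>{0..<n}. blk v = j+1}. - m (i+1) (j+1) / lam (j+1))"
      by (rule sum.inter_filter[symmetric]) simp
    also have "{v\<in>{0..<n}. blk v = j+1} = {v. v < n1+n2+n3 \<and> mx_block t1 t2 t3 v = j+1}"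
      by (auto simp: n_def blk_def)
    finally have "(V * W) $$ (i,j) = - m (i+1) (j+1) * real (card {v. v < n1+n2+n3 \<and> mx_block t1 t2 t3 v = j+1}) / lam (j+1)"
      by simp
    then show "(1\<^sub>m 3 + V * W) $$ (i,j) = mat 3 3 (\<lambda>(i,j). (if i = j then 1 else 0) - mf t1 t2 t3 (i+1) (j+1) * real (card {v. v < n1+n2+n3 \<and> mx_block t1 t2 t3 v = j+1}) / lam (j+1)) $$ (i,j)"
      using i j V W by (simp add: m_def)
  qed (insert V W, auto)
  show ?thesis unfolding p dLam syl VW ..
qed


lemma card_blk1: "card {v. v < nat \<bar>t1\<bar> + nat \<bar>t2\<bar> + nat \<bar>t3\<bar> \<and> mx_block t1 t2 t3 v = 1} = nat \<bar>t1\<bar>"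
proof -
  have "{v. v < nat \<bar>t1\<bar> + nat \<bar>t2\<bar> + nat \<bar>t3\<bar> \<and> mx_block t1 t2 t3 v = 1} = {0..<nat \<bar>t1\<bar>}"
    by (auto simp: mx_block_def)
  then show ?thesis by simp
qed
lemma card_blk2: "card {v. v < nat \<bar>t1\<bar> + nat \<bar>t2\<bar> + nat \<bar>t3\<bar> \<and> mx_block t1 t2 t3 v = 2} = nat \<bar>t2\<bar>"
proof -
  have "{v. v < nat \<bar>t1\<bar> + nat \<bar>t2\<bar> + nat \<bar>t3\<bar> \<and> mx_block t1 t2 t3 v = 2} = {nat \<bar>t1\<bar>..<nat \<bar>t1\<bar> + nat \<bar>t2\<bar>}"
    by (auto simp: mx_block_def)
  then show ?thesis by simp
qed
lemma card_blk3: "card {v. v < nat \<bar>t1\<bar> + nat \<bar>t2\<bar> + nat \<bar>t3\<bar> \<and> mx_block t1 t2 t3 v = 3} = nat \<bar>t3\<bar>"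
proof -
  have "{v. v < nat \<bar>t1\<bar> + nat \<bar>t2\<bar> + nat \<bar>t3\<bar> \<and> mx_block t1 t2 t3 v = 3} = {nat \<bar>t1\<bar> + nat \<bar>t2\<bar>..<nat \<bar>t1\<bar> + nat \<bar>t2\<bar> + nat \<bar>t3\<bar>}"
    by (auto simp: mx_block_def)
  then show ?thesis by simp
qed

lemma P3_edge_iff: "P3_edge a b \<longleftrightarrow> (a = 1 \<and> b = 2) \<or> (a = 2 \<and> b = 1) \<or> (a = 2 \<and> b = 3) \<or> (a = 3 \<and> b = 2)"
  unfolding P3_edge_def doubleton_eq_iff by auto

lemma P3_vals: "P3_edge 1 2" "P3_edge 2 1" "P3_edge 2 3" "P3_edge 3 2"
  "\<not> P3_edge 1 1" "\<not> P3_edge 2 2" "\<not> P3_edge 3 3" "\<not> P3_edge 1 3" "\<not> P3_edge 3 1"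
  by (auto simp: P3_edge_def doubleton_eq_iff)

lemma key:
  fixes x y P Q R S :: real
  assumes x0: "x \<noteq> 0" and x1: "y \<noteq> 0" and y: "y = x + 1" and PQ: "Q - P \<noteq> 0"
    and R: "R * (Q - P) = Q * (2*Q - P - 1)" and S: "S = R - (2*Q - P - 1)"
  shows "(1 - P/y) * (1 * (1 - R/y) - (- R/y) * (- Q/x))
       - (- Q/x) * ((- P/y) * (1 - R/y) - (- R/y) * 0)
       + 0 * ((- P/y) * (- Q/x) - 1 * 0)
     = 1 * ((1 - (2*Q-1)/y) * (1 - S/y) - (- S/y) * (- (2*Q-1)/y))
       - (- (2*Q-1)/y) * ((- Q/x) * (1 - S/y) - (- S/y) * 0)
       + 0 * ((- Q/x) * (- (2*Q-1)/y) - (1 - (2*Q-1)/y) * 0)" (is "?L = ?R")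
proof -
  have e1: "x*y^2 * ?L = x*(y-P)*(y-R) - Q*R*y - P*Q*y + 2*P*Q*R"
    using x0 x1 by (simp add: field_simps power2_eq_square)
  have e2: "x*y^2 * ?R = x*(y-(2*Q-1))*(y-S) - (2*Q-1)*S*x - Q*(2*Q-1)*(y-S)"
    using x0 x1 by (simp add: field_simps power2_eq_square)
  have "(x*(y-P)*(y-R) - Q*R*y - P*Q*y + 2*P*Q*R) - (x*(y-(2*Q-1))*(y-S) - (2*Q-1)*S*x - Q*(2*Q-1)*(y-S))
     = -(x+2*Q) * (R*(Q-P) - Q*(2*Q-P-1))"
    unfolding S y by (simp add: algebra_simps)
  then have "x*y^2 * ?L = x*y^2 * ?R" unfolding e1 e2 using R by simp
  then show ?thesis using x0 x1 by simp
qed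



lemma F_eq:
  fixes x y Q S :: real
  assumes "x \<noteq> 0" "y \<noteq> 0"
  shows "((1 - (2 * Q - 1) / y) * (1 - S / y) - S * (2 * Q - 1) / (y * y) - (2 * Q - 1) * (Q * (1 - S / y)) / (y * x))
   = 1 * ((1 - (2*Q-1)/y) * (1 - S/y) - (- S/y) * (- (2*Q-1)/y))
       - (- (2*Q-1)/y) * ((- Q/x) * (1 - S/y) - (- S/y) * 0)
       + 0 * ((- Q/x) * (- (2*Q-1)/y) - (1 - (2*Q-1)/y) * 0)"
  using assms by (simp add: field_simps)

lemma main_det2:
  fixes t1 t2 t3 :: int and x :: real
  defines "n1 \<equiv> nat \<bar>t1\<bar>" and "n2 \<equiv> nat \<bar>t2\<bar>" and "n3 \<equiv> nat \<bar>t3\<bar>"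
  defines "lam \<equiv> \<lambda>b. x + mf t1 t2 t3 b b"
  defines "N \<equiv> \<lambda>j::nat. if j = 0 then n1 else if j = 1 then n2 else n3"
  defines "a \<equiv> \<lambda>i j. (if i = j then 1 else 0) - mf t1 t2 t3 (i+1) (j+1) * real (N j) / lam (j+1)"
  assumes x0: "x \<noteq> 0" and x1: "x \<noteq> -1"
  shows "poly (char_poly (map_mat real_of_int (mixed_ext_P3_adj t1 t2 t3))) x = lam 1 ^ n1 * lam 2 ^ n2 * lam 3 ^ n3 *
     (a 0 0 * (a 1 1 * a 2 2 - a 1 2 * a 2 1) - a 0 1 * (a 1 0 * a 2 2 - a 1 2 * a 2 0) + a 0 2 * (a 1 0 * a 2 1 - a 1 1 * a 2 0))"
proof -
  have M: "mat 3 3 (\<lambda>(i,j). (if i = j then 1 else 0) - mf t1 t2 t3 (i+1) (j+1) * real (card {v. v < n1+n2+n3 \<and> mx_block t1 t2 t3 v = j+1}) / lam (j+1))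
    = mat 3 3 (\<lambda>(i,j). a i j)" (is "?A = ?B")
  proof (rule eq_matI)
    fix i j assume "i < dim_row ?B" "j < dim_col ?B"
    hence i: "i < 3" and j: "j < 3" by auto
    have "card {v. v < n1+n2+n3 \<and> mx_block t1 t2 t3 v = j+1} = N j"
    proof -
      have "j = 0 \<or> j = 1 \<or> j = 2" using j by auto
      moreover have ?thesis if "j = 0" using card_blk1[of t1 t2 t3] unfolding that N_def n1_def n2_def n3_def by (simp add: numeral_2_eq_2 numeral_3_eq_3)
      moreover have ?thesis if "j = 1" using card_blk2[of t1 t2 t3] unfolding that N_def n1_def n2_def n3_def by (simp add: numeral_2_eq_2 numeral_3_eq_3)
      moreover have ?thesis if "j = 2" using card_blk3[of t1 t2 t3] unfolding that N_def n1_def n2_def n3_def by (simp add: numeral_2_eq_2 numeral_3_eq_3)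
      ultimately show ?thesis by blast
    qed
    then show "?A $$ (i,j) = ?B $$ (i,j)" using i j by (simp add: a_def)
  qed auto
  have D: "det (mat 3 3 (\<lambda>(i,j). a i j)) = (a 0 0 * (a 1 1 * a 2 2 - a 1 2 * a 2 1) - a 0 1 * (a 1 0 * a 2 2 - a 1 2 * a 2 0) + a 0 2 * (a 1 0 * a 2 1 - a 1 1 * a 2 0))"
    by (subst det3) simp_all
  have "poly (char_poly (map_mat real_of_int (mixed_ext_P3_adj t1 t2 t3))) x = lam 1 ^ n1 * lam 2 ^ n2 * lam 3 ^ n3 * det ?A"
    using main_det[OF x0 x1, of t1 t2 t3] unfolding lam_def n1_def n2_def n3_def by simp
  then show ?thesis unfolding M D .
qed


lemma poly_eq_from_cofinite:
  fixes P Q :: "real poly"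
  assumes "\<And>x. x \<noteq> 0 \<Longrightarrow> x \<noteq> -1 \<Longrightarrow> poly P x = poly Q x"
  shows "P = Q"
proof (rule ccontr)
  assume "P \<noteq> Q"
  then have "P - Q \<noteq> 0" by simp
  then have fin: "finite {x. poly (P - Q) x = 0}" by (rule poly_roots_finite)
  have "UNIV - {0, -1} \<subseteq> {x. poly (P - Q) x = 0}" using assms by auto
  then have "finite (UNIV - {0, -1::real})" using fin finite_subset by blast
  then have "finite (UNIV :: real set)" by simp
  then show False using infinite_UNIV_char_0 by blast
qed

theorem proposition4:
  fixes p q :: int
  assumes "p \<ge> 1" and "q \<ge> 1" and "p \<noteq> q"
    and "(q - p) dvd (q * (2*q - p - 1))"
    and "q * (2*q - p - 1) div (q - p) > 0"
  shows "cospectral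
           (mixed_ext_P3_adj p (-q) (q * (2*q - p - 1) div (q - p)))
           (mixed_ext_P3_adj (-q) (2*q - 1) (p * (2*q - p - 1) div (q - p)))"
proof -
  define r where "r = q * (2*q - p - 1) div (q - p)"
  define s where "s = p * (2*q - p - 1) div (q - p)"
  have rr: "r * (q - p) = q * (2*q - p - 1)" using assms(4) unfolding r_def by simp
  have r0: "r > 0" using assms(5) unfolding r_def by simp
  have "p * (2*q - p - 1) = q * (2*q - p - 1) + (q - p) * (- (2*q - p - 1))" by (simp add: algebra_simps)
  then have "s = r - (2*q - p - 1)" unfolding s_def r_def using assms(3,4)
    by (simp add: div_plus_div_distrib_dvd_right)
  then have ss: "s = r - (2*q - p - 1)" .
  have sq: "s * (q - p) = p * (2*q - p - 1)"
  proof -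
    have "s * (q - p) = r * (q - p) - (2*q - p - 1) * (q - p)" unfolding ss by (simp add: left_diff_distrib)
    also have "\<dots> = q * (2*q - p - 1) - (2*q - p - 1) * (q - p)" using rr by simp
    also have "\<dots> = p * (2*q - p - 1)" by (simp add: algebra_simps)
    finally show ?thesis .
  qed
  have s0: "s > 0"
  proof (cases "q > p")
    case True
    then have "p * (2*q - p - 1) > 0" using assms(1) by (intro mult_pos_pos) auto
    then have "s * (q - p) > 0" using sq by simp
    then show ?thesis using True by (simp add: zero_less_mult_iff)
  next
    case False
    then have qp: "q - p < 0" using assms(3) by simp
    then have "q * (2*q - p - 1) < 0" using rr r0 by (metis mult_pos_neg)
    then have "2*q - p - 1 < 0" using assms(2) by (simp add: mult_less_0_iff)
    then have "p * (2*q - p - 1) < 0" using assms(1) by (intro mult_pos_neg) auto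
    then have "s * (q - p) < 0" using sq by simp
    then show ?thesis using qp by (simp add: mult_less_0_iff)
  qed
  define A1 where "A1 = mixed_ext_P3_adj p (-q) r"
  define A2 where "A2 = mixed_ext_P3_adj (-q) (2*q - 1) s"
  have nn: "nat p + nat r = nat (2*q - 1) + nat s" using ss assms(1,2) r0 s0 by simp
  have ev: "poly (char_poly (map_mat real_of_int A1)) x = poly (char_poly (map_mat real_of_int A2)) x"
    if x0: "x \<noteq> 0" and x1: "x \<noteq> -1" for x
  proof -
    have y: "x + 1 \<noteq> 0" using x1 by (metis add.commute add_eq_0_iff)
    have K: "(1 - real_of_int p/(x+1)) * (1 * (1 - real_of_int r/(x+1)) - (- real_of_int r/(x+1)) * (- real_of_int q/x))
       - (- real_of_int q/x) * ((- real_of_int p/(x+1)) * (1 - real_of_int r/(x+1)) - (- real_of_int r/(x+1)) * 0)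
       + 0 * ((- real_of_int p/(x+1)) * (- real_of_int q/x) - 1 * 0)
     = 1 * ((1 - (2*real_of_int q-1)/(x+1)) * (1 - real_of_int s/(x+1)) - (- real_of_int s/(x+1)) * (- (2*real_of_int q-1)/(x+1)))
       - (- (2*real_of_int q-1)/(x+1)) * ((- real_of_int q/x) * (1 - real_of_int s/(x+1)) - (- real_of_int s/(x+1)) * 0)
       + 0 * ((- real_of_int q/x) * (- (2*real_of_int q-1)/(x+1)) - (1 - (2*real_of_int q-1)/(x+1)) * 0)" (is "?L = ?R")
    proof (rule key[OF x0 y refl])
      show "real_of_int q - real_of_int p \<noteq> 0" using assms(3) by simp
      show "real_of_int r * (real_of_int q - real_of_int p) = real_of_int q * (2 * real_of_int q - real_of_int p - 1)"
        using arg_cong[OF rr, of real_of_int] by simp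
      show "real_of_int s = real_of_int r - (2 * real_of_int q - real_of_int p - 1)"
        using ss by simp
    qed
    have e1: "poly (char_poly (map_mat real_of_int A1)) x = (x+1) ^ nat p * x ^ nat q * (x+1) ^ nat r * ?L"
      unfolding A1_def using main_det2[OF x0 x1, of p "-q" r] assms(1,2) r0
      by (simp add: mf_def mx_type_def P3_edge_iff)
    have e2: "poly (char_poly (map_mat real_of_int A2)) x = x ^ nat q * (x+1) ^ nat (2*q-1) * (x+1) ^ nat s *
      ((1 - (2 * real_of_int q - 1) / (x + 1)) * (1 - real_of_int s / (x + 1)) - real_of_int s * (2 * real_of_int q - 1) / ((x + 1) * (x + 1)) - (2 * real_of_int q - 1) * (real_of_int q * (1 - real_of_int s / (x + 1))) / ((x + 1) * x))"
      unfolding A2_def using main_det2[OF x0 x1, of "-q" "2*q-1" s] assms(1,2) s0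
      by (simp add: mf_def mx_type_def P3_edge_iff)
    note e2 = e2[unfolded F_eq[OF x0 y]]
    have "(x+1) ^ nat p * x ^ nat q * (x+1) ^ nat r = x ^ nat q * (x+1) ^ nat (2*q-1) * (x+1) ^ nat s"
    proof -
      have "(x+1) ^ nat p * x ^ nat q * (x+1) ^ nat r = x ^ nat q * (x+1) ^ (nat p + nat r)" by (simp add: power_add)
      also have "\<dots> = x ^ nat q * (x+1) ^ nat (2*q-1) * (x+1) ^ nat s" unfolding nn by (simp add: power_add)
      finally show ?thesis .
    qed
    then show ?thesis unfolding e1 e2 K by simp
  qed
  have A1c: "A1 \<in> carrier_mat (dim_row A1) (dim_row A1)" unfolding A1_def mixed_ext_P3_adj_def by (simp add: Let_def)
  have A2c: "A2 \<in> carrier_mat (dim_row A2) (dim_row A2)" unfolding A2_def mixed_ext_P3_adj_def by (simp add: Let_def)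
  have "char_poly (map_mat real_of_int A1) = char_poly (map_mat real_of_int A2)"
    by (rule poly_eq_from_cofinite) (rule ev)
  then have "map_poly real_of_int (char_poly A1) = map_poly real_of_int (char_poly A2)"
    unfolding of_int_hom.char_poly_hom[OF A1c] of_int_hom.char_poly_hom[OF A2c] .
  then have "char_poly A1 = char_poly A2"
    by (metis (no_types) coeff_map_poly of_int_0 of_int_eq_iff poly_eqI)
  then show ?thesis unfolding cospectral_def A1_def A2_def r_def s_def .
qed

end
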